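(* Let $p$ be an odd prime. Then $$\sum_{r=0}^{\frac{p-1}{2}}\binom{\frac{p-1}{2}}{r}^3\equiv 0\pmod{p}\quad\Longleftrightarrow\quad p\equiv 5\pmod 8\ \text{ or }\ p\equiv 7\pmod 8.$$ *)

theory Defs
  imports "HOL-Number_Theory.Number_Theory"
begin

end

theory Submission
  imports Defs "HOL-Computational_Algebra.Polynomial"
begin


definition Dop :: "int poly \<Rightarrow> int poly" where "Dop q = [:0,1:] * pderiv q"

lemma X_mult: "[:0,1:] * (q::int poly) = pCons 0 q"
  by (simp add: mult_pCons_left smult_1_left)

lemma coeff_X_mult: "coeff ([:0,1:] * (q::int poly)) k = (if k = 0 then 0 else coeff q (k-1))"
  unfolding X_mult by (cases k) (auto simp: coeff_pCons)

lemma coeff_Dop: "coeff (Dop q) k = int k * coeff q k"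
  by (cases k) (auto simp: Dop_def coeff_X_mult coeff_pderiv)

lemma coeff_mult_num [simp]: "coeff ((q::int poly) * numeral n) k = numeral n * coeff q k"
  by (metis coeff_smult mult.commute numeral_mult_conv_smult)

lemma Dop_mult: "Dop (a*b) = Dop a * b + a * Dop b"
  by (simp add: Dop_def pderiv_mult algebra_simps)
lemma Dop_add: "Dop (a+b) = Dop a + Dop b"
  by (simp add: Dop_def pderiv_add algebra_simps)
lemma Dop_diff: "Dop (a-b) = Dop a - Dop b"
  by (simp add: Dop_def pderiv_diff algebra_simps)
lemma Dop_of_int [simp]: "Dop (of_int c) = 0"
  by (simp add: Dop_def of_int_poly)
lemma Dop_numeral [simp]: "Dop (numeral n) = 0"
  by (simp add: Dop_def)
lemma Dop_one [simp]: "Dop 1 = 0"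
  by (simp add: Dop_def)
lemma Dop_X [simp]: "Dop [:0,1:] = [:0,1:]"
  by (simp add: Dop_def pderiv_pCons)

definition fpoly :: "nat \<Rightarrow> int poly" where
  "fpoly M = (\<Sum>i\<le>M. monom (int (M choose i)^2) i)"

lemma coeff_fpoly: "coeff (fpoly M) k = int (M choose k)^2"
  by (auto simp: fpoly_def coeff_sum coeff_monom)

lemma degree_fpoly: "degree (fpoly M) \<le> M"
  by (rule degree_le) (auto simp: coeff_fpoly)

lemma binom_rec: "Suc k * (n choose Suc k) = (n - k) * (n choose k)"
  by (metis binomial_absorption binomial_absorb_comp)

lemma binom_rec_int: "int (Suc k) * int (n choose Suc k) = (int n - int k) * int (n choose k)"
proof (cases "k \<le> n")
  case True
  then show ?thesis using binom_rec[of k n] by (metis of_nat_diff of_nat_mult)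
next
  case False
  then show ?thesis by (simp add: binomial_eq_0)
qed

lemma ode:
  "Dop (Dop (fpoly M)) = [:0,1:] * (Dop (Dop (fpoly M)) + 2 * of_int (- int M) * Dop (fpoly M)
      + (of_int (- int M))^2 * fpoly M)"
proof (rule poly_eqI)
  fix k
  show "coeff (Dop (Dop (fpoly M))) k = coeff ([:0,1:] * (Dop (Dop (fpoly M)) + 2 * of_int (- int M) * Dop (fpoly M)
      + (of_int (- int M))^2 * fpoly M)) k"
  proof (cases k)
    case 0 then show ?thesis by (simp add: coeff_Dop coeff_X_mult)
  next
    case (Suc j)
    have e: "int (Suc j) * int (M choose Suc j) = (int M - int j) * int (M choose j)"
      by (rule binom_rec_int)
    have "coeff (Dop (Dop (fpoly M))) k = (int (Suc j) * int (M choose Suc j))^2"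
      by (simp add: Suc coeff_Dop coeff_fpoly power2_eq_square)
    also have "\<dots> = ((int M - int j) * int (M choose j))^2" by (simp only: e)
    also have "\<dots> = coeff ([:0,1:] * (Dop (Dop (fpoly M)) + 2 * of_int (- int M) * Dop (fpoly M)
      + (of_int (- int M))^2 * fpoly M)) k"
      by (simp add: Suc coeff_X_mult coeff_Dop coeff_fpoly of_int_poly numeral_mult_conv_smult power2_eq_square algebra_simps)
    finally show ?thesis .
  qed
qed

definition shift :: "int \<Rightarrow> int poly \<Rightarrow> int poly" where "shift a q = Dop q + of_int a * q"

lemma coeff_of_int_mult: "coeff (of_int c * q) k = c * coeff q k"
  by (simp add: of_int_poly)

lemma coeff_shift: "coeff (shift a q) k = (int k + a) * coeff q k"
  by (simp add: shift_def coeff_Dop coeff_of_int_mult distrib_right)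

lemma Dop_cmult: "Dop (of_int c * q) = of_int c * Dop q"
  by (simp add: Dop_mult)

lemma caseA_alg:
  fixes u v w dw x s :: "'a::idom"
  assumes R1: "w = x*(w + 2*s*v + s^2*u)"
    and R2: "dw = x*(w + 2*s*v + s^2*u) + x*(dw + 2*s*w + s^2*v)"
  shows "(1-x)*((6*v*w + 2*u*dw) - x*((6*v*w + 2*u*dw) + 6*s*(2*v*v+2*u*w) + 12*s^2*(2*u*v) + 8*s^3*(u*u)))
     = 2*s*(1-4*s)*x*(2*u*v + s*(u*u))"
proof -
  have "(1-x)*((6*v*w + 2*u*dw) - x*((6*v*w + 2*u*dw) + 6*s*(2*v*v+2*u*w) + 12*s^2*(2*u*v) + 8*s^3*(u*u)))
     - 2*s*(1-4*s)*x*(2*u*v + s*(u*u)) = (6*v - 6*v*x + 2*u*x - 8*u*x*s) * (w - x*(w + 2*s*v + s^2*u))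
     + (2*u - 2*u*x) * (dw - (x*(w + 2*s*v + s^2*u) + x*(dw + 2*s*w + s^2*v)))"
    by (simp add: algebra_simps power2_eq_square power3_eq_cube)
  then show ?thesis using R1 R2 by simp
qed
lemma caseB_alg:
  fixes u v w dw x s c G0 G1 G2 G3 :: "'a::idom"
  assumes R1: "w = x*(w + 2*s*v + s^2*u)"
    and R2: "dw = x*(w + 2*s*v + s^2*u) + x*(dw + 2*s*w + s^2*v)"
    and c: "c = 2*s - 1"
    and G: "G0 = (1-x)*(u*u)" "G1 = -x*u*u + (1-x)*2*u*v"
    "G2 = -x*u*u - 4*x*u*v + (1-x)*(2*v*v+2*u*w)"
    "G3 = -x*u*u - 6*x*u*v - 6*x*v*v - 6*x*u*w + (1-x)*(6*v*w + 2*u*dw)"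
  shows "G3 - x*(G3 + 3*c*G2 + 3*c^2*G1 + c^3*G0) = -2*(4*s-3)*(s-1)*x*(2*u*v + s*(u*u))"
proof -
  have "G3 - x*(G3 + 3*c*G2 + 3*c^2*G1 + c^3*G0) - (-2*(4*s-3)*(s-1)*x*(2*u*v + s*(u*u)))
    = (6*v - 6*v*x + 2*u*x - 8*u*x*s) * (w - x*(w + 2*s*v + s^2*u))
     + (2*u - 2*u*x) * (dw - (x*(w + 2*s*v + s^2*u) + x*(dw + 2*s*w + s^2*v)))"
    unfolding G c by (simp add: algebra_simps power2_eq_square power3_eq_cube)
  then show ?thesis using R1 R2 by simp
qed

lemma Dop_minus: "Dop (- a) = - Dop a"
  by (simp add: Dop_def pderiv_minus)

lemma Dop_Xmult: "Dop ([:0,1:] * q) = [:0,1:] * q + [:0,1:] * Dop q"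
  by (simp only: Dop_mult Dop_X)

lemma shift3: "shift c (shift c (shift c q)) =
   Dop (Dop (Dop q)) + 3 * of_int c * Dop (Dop q) + 3 * (of_int c)^2 * Dop q + (of_int c)^3 * q"
  unfolding shift_def Dop_add Dop_cmult by (simp add: algebra_simps power2_eq_square power3_eq_cube)

lemma ode2:
  fixes M :: nat
  defines "u \<equiv> fpoly M" and "s \<equiv> (of_int (- int M) :: int poly)" and "x \<equiv> [:0,1::int:]"
  shows "Dop (Dop (Dop u)) = x*(Dop (Dop u) + 2*s*Dop u + s^2*u) + x*(Dop (Dop (Dop u)) + 2*s*Dop (Dop u) + s^2*Dop u)"
proof -
  have "Dop (Dop (Dop u)) = Dop (x*(Dop (Dop u) + 2*s*Dop u + s^2*u))"
    using ode[of M] unfolding u_def s_def x_def by simp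
  also have "\<dots> = x*(Dop (Dop u) + 2*s*Dop u + s^2*u) + x*Dop (Dop (Dop u) + 2*s*Dop u + s^2*u)"
    unfolding x_def by (rule Dop_Xmult)
  also have "Dop (Dop (Dop u) + 2*s*Dop u + s^2*u) = Dop (Dop (Dop u)) + 2*s*Dop (Dop u) + s^2*Dop u"
    by (simp only: Dop_add Dop_mult Dop_of_int Dop_numeral power2_eq_square s_def mult_zero_left mult_zero_right add_0_left add_0_right)
  finally show ?thesis .
qed

locale setupM =
  fixes M :: nat
begin
definition "u = fpoly M"
definition "v = Dop u"
definition "w = Dop v"
definition "dw = Dop w"
definition "S = - int M"
definition "s = (of_int S :: int poly)"
definition "x = [:0,1::int:]"

lemma R1: "w = x*(w + 2*s*v + s^2*u)"
  using ode[of M] unfolding u_def v_def w_def s_def x_def S_def by simp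
lemma R2: "dw = x*(w + 2*s*v + s^2*u) + x*(dw + 2*s*w + s^2*v)"
  using ode2[of M] unfolding u_def v_def w_def dw_def s_def x_def S_def by simp

lemma Du: "Dop u = v" by (simp add: v_def)
lemma Dv: "Dop v = w" by (simp add: w_def)
lemma Dw: "Dop w = dw" by (simp add: dw_def)
lemma Dx: "Dop x = x" by (simp add: x_def)
lemma Ds: "Dop s = 0" by (simp add: s_def)

lemmas Drules = Dop_mult Dop_add Dop_diff Dop_minus Du Dv Dw Dx Ds Dop_numeral Dop_one

lemma D1: "Dop (u*u) = 2*u*v" by (simp add: Drules algebra_simps)
lemma D2: "Dop (2*u*v) = 2*v*v + 2*u*w" by (simp add: Drules algebra_simps)
lemma D3: "Dop (2*v*v + 2*u*w) = 6*v*w + 2*u*dw" by (simp add: Drules algebra_simps)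
lemma DDD: "Dop (Dop (Dop (u*u))) = 6*v*w + 2*u*dw" by (simp only: D1 D2 D3)

lemma polyA:
  "(1 - x) * (Dop (Dop (Dop (u*u))) - x * shift (2*S) (shift (2*S) (shift (2*S) (u*u))))
     = of_int (2*S*(1-4*S)) * (x * shift S (u*u))"
proof -
  have "(1-x)*((6*v*w + 2*u*dw) - x*((6*v*w + 2*u*dw) + 6*s*(2*v*v+2*u*w) + 12*s^2*(2*u*v) + 8*s^3*(u*u)))
     = 2*s*(1-4*s)*x*(2*u*v + s*(u*u))"
    by (rule caseA_alg[OF R1 R2])
  moreover have "shift (2*S) (shift (2*S) (shift (2*S) (u*u))) = (6*v*w + 2*u*dw) + 6*s*(2*v*v+2*u*w) + 12*s^2*(2*u*v) + 8*s^3*(u*u)"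
    unfolding shift3 D1 D2 D3 by (simp add: s_def algebra_simps power2_eq_square power3_eq_cube)
  moreover have "shift S (u*u) = 2*u*v + s*(u*u)" by (simp add: shift_def D1 s_def)
  moreover have "(of_int (2*S*(1-4*S)) :: int poly) = 2*s*(1-4*s)" by (simp add: s_def)
  ultimately show ?thesis unfolding DDD by (simp only: mult.assoc)
qed

lemma G1: "Dop ((1-x)*(u*u)) = -x*u*u + (1-x)*2*u*v"
  by (simp add: Drules algebra_simps)
lemma G2: "Dop (Dop ((1-x)*(u*u))) = -x*u*u - 4*x*u*v + (1-x)*(2*v*v+2*u*w)"
  unfolding G1 by (simp add: Drules algebra_simps)
lemma G3: "Dop (Dop (Dop ((1-x)*(u*u)))) = -x*u*u - 6*x*u*v - 6*x*v*v - 6*x*u*w + (1-x)*(6*v*w + 2*u*dw)"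
  unfolding G2 by (simp add: Drules algebra_simps)

lemma polyB:
  "Dop (Dop (Dop ((1-x)*(u*u)))) - x * shift (2*S-1) (shift (2*S-1) (shift (2*S-1) ((1-x)*(u*u))))
     = of_int (-2*(4*S-3)*(S-1)) * (x * shift S (u*u))"
proof -
  have "Dop (Dop (Dop ((1-x)*(u*u)))) - x*(Dop (Dop (Dop ((1-x)*(u*u)))) + 3*(2*s-1)*Dop (Dop ((1-x)*(u*u)))
     + 3*(2*s-1)^2*Dop ((1-x)*(u*u)) + (2*s-1)^3*((1-x)*(u*u)))
     = -2*(4*s-3)*(s-1)*x*(2*u*v + s*(u*u))"
    by (rule caseB_alg[OF R1 R2 refl refl G1 G2 G3])
  moreover have "shift S (u*u) = 2*u*v + s*(u*u)" by (simp add: shift_def D1 s_def)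
  moreover have "(of_int (-2*(4*S-3)*(S-1)) :: int poly) = -2*(4*s-3)*(s-1)" by (simp add: s_def)
  moreover have "(of_int (2*S-1) :: int poly) = 2*s-1" by (simp add: s_def)
  ultimately show ?thesis unfolding shift3 by (simp only: mult.assoc)
qed

end



lemma coeffH: "coeff (Dop (Dop (Dop q)) - [:0,1:] * shift c (shift c (shift c q))) k
   = int k^3 * coeff q k - (if k = 0 then 0 else (int k - 1 + c)^3 * coeff q (k-1))"
  by (cases k) (simp_all add: coeff_Dop coeff_X_mult coeff_shift power3_eq_cube algebra_simps)

lemma coeff_1mX: "coeff ((1 - [:0,1:]) * (q::int poly)) k = coeff q k - (if k = 0 then 0 else coeff q (k-1))"
proof -
  have "(1 - [:0,1:]) * q = q - [:0,1:] * q" by (simp add: algebra_simps)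
  then show ?thesis by (simp only: coeff_diff coeff_X_mult)
qed

lemma final_rec:
  fixes G :: "nat \<Rightarrow> int" and p N :: nat
  assumes p: "prime p" and Np: "N < p" and G0: "G 0 = 1"
    and rec: "\<And>k. 1 \<le> k \<Longrightarrow> k \<le> N \<Longrightarrow> int p dvd (int k^3 * G k - (int k - 1 - int N)^3 * G (k-1))"
  shows "k \<le> N \<Longrightarrow> int p dvd (G k - (-1)^k * int (N choose k)^3)"
proof (induction k)
  case 0 then show ?case using G0 by simp
next
  case (Suc k)
  define c where "c j = (-1)^j * int (N choose j)^3" for j
  have b: "(int (Suc k) * int (N choose Suc k))^3 = ((int N - int k) * int (N choose k))^3"
    using binom_rec_int[of k N] by simp
  have ex: "int (Suc k)^3 * c (Suc k) = (int (Suc k) - 1 - int N)^3 * c k"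
  proof -
    have "int (Suc k)^3 * c (Suc k) = - ((-1)^k * (int (Suc k) * int (N choose Suc k))^3)"
      by (simp add: c_def power_mult_distrib)
    also have "\<dots> = - ((-1)^k * ((int N - int k) * int (N choose k))^3)" by (simp only: b)
    also have "\<dots> = (int (Suc k) - 1 - int N)^3 * c k"
      by (simp add: c_def power_mult_distrib power3_eq_cube algebra_simps)
    finally show ?thesis .
  qed
  have IH: "int p dvd (G k - c k)" using Suc by (simp add: c_def)
  have r: "int p dvd (int (Suc k)^3 * G (Suc k) - (int (Suc k) - 1 - int N)^3 * G k)"
    using rec[of "Suc k"] Suc.prems by simp
  have eq: "int (Suc k)^3 * (G (Suc k) - c (Suc k)) =
     (int (Suc k)^3 * G (Suc k) - (int (Suc k) - 1 - int N)^3 * G k) + (int (Suc k) - 1 - int N)^3 * (G k - c k)"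
    using ex by (simp add: algebra_simps)
  have "int p dvd int (Suc k)^3 * (G (Suc k) - c (Suc k))"
    unfolding eq using r IH by simp
  moreover have pi: "prime (int p)" using p by simp
  moreover have "\<not> int p dvd int (Suc k)"
  proof
    assume "int p dvd int (Suc k)"
    then have "p dvd Suc k" by (simp only: int_dvd_int_iff)
    then have "p \<le> Suc k" by (simp add: dvd_imp_le)
    with Suc.prems Np show False by simp
  qed
  ultimately have "int p dvd (G (Suc k) - c (Suc k))"
    using prime_dvd_mult_iff prime_dvd_power by metis
  then show ?case by (simp add: c_def)
qed

lemma poly_sum_le: fixes q :: "int poly" assumes "degree q \<le> N" shows "poly q a = (\<Sum>k\<le>N. coeff q k * a^k)"
proof -
  have "poly q a = (\<Sum>k\<le>degree q. coeff q k * a^k)" by (rule poly_altdef)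
  also have "\<dots> = (\<Sum>k\<le>N. coeff q k * a^k)"
    by (rule sum.mono_neutral_left) (use assms in \<open>auto simp: coeff_eq_0\<close>)
  finally show ?thesis .
qed

lemma sum_cong_lemma:
  fixes G :: "nat \<Rightarrow> int"
  assumes "\<And>k. k \<le> N \<Longrightarrow> int p dvd (G k - (-1)^k * int (N choose k)^3)"
  shows "int p dvd ((\<Sum>k\<le>N. G k * (-1)^k) - int (\<Sum>r=0..N. (N choose r)^3))"
proof -
  have "(\<Sum>k\<le>N. G k * (-1)^k) - int (\<Sum>r=0..N. (N choose r)^3)
      = (\<Sum>k\<le>N. (-1)^k * (G k - (-1)^k * int (N choose k)^3))"
  proof -
    have "int (\<Sum>r=0..N. (N choose r)^3) = (\<Sum>k\<le>N. int (N choose k)^3)"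
      by (simp add: atLeast0AtMost)
    moreover have "\<And>k. (-1::int)^k * (G k - (-1)^k * int (N choose k)^3) = G k * (-1)^k - int (N choose k)^3"
      by (simp add: algebra_simps flip: power_add)
    ultimately show ?thesis by (simp add: sum_subtractf)
  qed
  also have "int p dvd \<dots>" using assms by (intro dvd_sum) simp
  finally show ?thesis .
qed


lemma B_closed:
  "(\<Sum>i\<le>M. int (M choose i)^2 * (-1)^i) = (if even M then (-1)^(M div 2) * int (M choose (M div 2)) else 0)"
proof -
  have e0: "[:1::int,-1:]*[:1,1:] = [:1,0,-1:]" by simp
  have e: "[:1,-1:]^M * [:1,1:]^M = ([:1::int,0,-1:])^M"
    by (metis power_mult_distrib e0)
  have "coeff ([:1,-1:]^M * [:1::int,1:]^M) M = (\<Sum>i\<le>M. coeff ([:1,-1:]^M) i * coeff ([:1::int,1:]^M) (M-i))"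
    by (rule coeff_mult)
  also have "\<dots> = (\<Sum>i\<le>M. int (M choose i)^2 * (-1)^i)"
  proof (rule sum.cong[OF refl])
    fix i assume "i \<in> {..M}"
    then have i: "i \<le> M" by simp
    have c1: "coeff ([:1::int,-1:]^M) i = of_nat (M choose i) * (-1)^i * 1^(M-i)"
      by (rule coeff_linear_poly_power[OF i])
    have c2: "coeff ([:1::int,1:]^M) (M-i) = of_nat (M choose (M-i)) * 1^(M-i) * 1^(M-(M-i))"
      by (rule coeff_linear_poly_power) simp
    have c3: "M choose (M-i) = M choose i" using binomial_symmetric[OF i] by simp
    show "coeff ([:1,-1:]^M) i * coeff ([:1::int,1:]^M) (M-i) = int (M choose i)^2 * (-1)^i"
      unfolding c1 c2 c3 by (simp add: power2_eq_square)
  qed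
  finally have L: "coeff ([:1::int,0,-1:]^M) M = (\<Sum>i\<le>M. int (M choose i)^2 * (-1)^i)"
    using e by simp
  have m: "[:1::int,0,-1:] = monom (-1) 2 + 1"
    by (simp add: monom_altdef numeral_2_eq_2 one_pCons)
  have "[:1::int,0,-1:]^M = (\<Sum>k\<le>M. of_nat (M choose k) * (monom (-1) 2)^k * 1^(M-k))"
    unfolding m by (rule binomial_ring)
  also have "\<dots> = (\<Sum>k\<le>M. monom (int (M choose k) * (-1)^k) (2*k))"
    by (intro sum.cong refl) (simp add: monom_power of_nat_poly smult_monom mult.commute)
  finally have "coeff ([:1::int,0,-1:]^M) M = (\<Sum>k\<le>M. if 2*k = M then int (M choose k) * (-1)^k else 0)"
    by (simp add: coeff_sum coeff_monom)
  also have "\<dots> = (if even M then (-1)^(M div 2) * int (M choose (M div 2)) else 0)"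
  proof (cases "even M")
    case True
    then have "(\<Sum>k\<le>M. if 2*k = M then int (M choose k) * (-1)^k else 0) =
       (\<Sum>k\<in>{M div 2}. int (M choose k) * (-1)^k)"
      by (intro sum.mono_neutral_cong_right) auto
    then show ?thesis using True by simp
  next
    case False
    then show ?thesis by (simp, intro sum.neutral) auto
  qed
  finally show ?thesis using L by simp
qed


context setupM begin

lemma recA:
  assumes "p = 4*M+1"
  shows "int p dvd (int k^3 * coeff (u*u) k - (if k=0 then 0 else (int k - 1 + 2*S)^3 * coeff (u*u) (k-1)))"
proof -
  define H where "H = Dop (Dop (Dop (u*u))) - x * shift (2*S) (shift (2*S) (shift (2*S) (u*u)))"
  have cH: "coeff H k = int k^3 * coeff (u*u) k - (if k=0 then 0 else (int k - 1 + 2*S)^3 * coeff (u*u) (k-1))" for k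
    unfolding H_def x_def by (rule coeffH)
  have pA: "(1-x)*H = of_int (2*S*(1-4*S)) * (x*shift S (u*u))" unfolding H_def by (rule polyA)
  have p4: "1 - 4*S = int p" using assms by (simp add: S_def)
  have d: "int p dvd (coeff H k - (if k = 0 then 0 else coeff H (k-1)))" for k
  proof -
    have "coeff H k - (if k = 0 then 0 else coeff H (k-1)) = coeff ((1-x)*H) k"
      unfolding x_def by (rule coeff_1mX[symmetric])
    also have "\<dots> = (2*S*(1-4*S)) * coeff (x*shift S (u*u)) k" by (simp only: pA coeff_of_int_mult)
    finally show ?thesis unfolding p4 by simp
  qed
  have "int p dvd coeff H k"
  proof (induction k)
    case 0 then show ?case using d[of 0] by simp
  next
    case (Suc k)
    have d1: "int p dvd (coeff H (Suc k) - coeff H k)" using d[of "Suc k"] by simp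
    have "int p dvd (coeff H (Suc k) - coeff H k) + coeff H k" by (rule dvd_add[OF d1 Suc.IH])
    then show ?case by simp
  qed
  then show ?thesis unfolding cH .
qed

lemma recB:
  assumes "p = 4*M+3"
  shows "int p dvd (int k^3 * coeff ((1-x)*(u*u)) k - (if k=0 then 0 else (int k - 1 + (2*S-1))^3 * coeff ((1-x)*(u*u)) (k-1)))"
proof -
  define H where "H = Dop (Dop (Dop ((1-x)*(u*u)))) - x * shift (2*S-1) (shift (2*S-1) (shift (2*S-1) ((1-x)*(u*u))))"
  have cH: "coeff H k = int k^3 * coeff ((1-x)*(u*u)) k - (if k=0 then 0 else (int k - 1 + (2*S-1))^3 * coeff ((1-x)*(u*u)) (k-1))"
    unfolding H_def x_def by (rule coeffH)
  have pB: "H = of_int (-2*(4*S-3)*(S-1)) * (x*shift S (u*u))" unfolding H_def by (rule polyB)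
  have p4: "4*S - 3 = - int p" using assms by (simp add: S_def)
  have "coeff H k = (-2*(4*S-3)*(S-1)) * coeff (x*shift S (u*u)) k" by (simp only: pB coeff_of_int_mult)
  then have "int p dvd coeff H k" unfolding p4 by simp
  then show ?thesis unfolding cH .
qed

lemma u0: "coeff (u*u) 0 = 1"
  by (simp add: coeff_mult_0 u_def coeff_fpoly)

lemma Bval: "poly u (-1) = (\<Sum>i\<le>M. int (M choose i)^2 * (-1)^i)"
  unfolding u_def by (subst poly_sum_le[OF degree_fpoly]) (simp add: coeff_fpoly)

end

context setupM begin
lemma keyA:
  assumes p: "prime p" and pM: "p = 4*M+1"
  shows "int p dvd (int (\<Sum>r=0..2*M. (2*M choose r)^3) - (poly u (-1))^2)"
proof -
  define N where "N = 2*M"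
  have Np: "N < p" using pM by (simp add: N_def)
  have rec: "int p dvd (int k^3 * coeff (u*u) k - (int k - 1 - int N)^3 * coeff (u*u) (k-1))"
    if k: "1 \<le> k" "k \<le> N" for k
  proof -
    have "int k - 1 + 2*S = int k - 1 - int N" by (simp add: S_def N_def)
    then show ?thesis using recA[OF pM, of k] k by simp
  qed
  have all: "int p dvd (coeff (u*u) k - (-1)^k * int (N choose k)^3)" if "k \<le> N" for k
    using final_rec[where G="\<lambda>k. coeff (u*u) k" and p=p and N=N, OF p Np u0 rec that] by simp
  have s: "int p dvd ((\<Sum>k\<le>N. coeff (u*u) k * (-1)^k) - int (\<Sum>r=0..N. (N choose r)^3))"
    by (rule sum_cong_lemma) (rule all)
  have dg: "degree (u*u) \<le> N"
    using degree_mult_le[of u u] degree_fpoly[of M] by (simp add: u_def N_def)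
  have "poly (u*u) (-1) = (\<Sum>k\<le>N. coeff (u*u) k * (-1)^k)" by (rule poly_sum_le[OF dg])
  moreover have "poly (u*u) (-1) = (poly u (-1))^2" by (simp add: power2_eq_square)
  ultimately show ?thesis using s unfolding N_def by (metis dvd_diff_commute)
qed

lemma keyB:
  assumes p: "prime p" and pM: "p = 4*M+3"
  shows "int p dvd (int (\<Sum>r=0..2*M+1. (2*M+1 choose r)^3) - 2*(poly u (-1))^2)"
proof -
  define N where "N = 2*M+1"
  define G where "G = (1-x)*(u*u)"
  have Np: "N < p" using pM by (simp add: N_def)
  have G0: "coeff G 0 = 1" unfolding G_def x_def coeff_1mX using u0 by simp
  have rec: "int p dvd (int k^3 * coeff G k - (int k - 1 - int N)^3 * coeff G (k-1))"
    if k: "1 \<le> k" "k \<le> N" for k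
  proof -
    have "int k - 1 + (2*S-1) = int k - 1 - int N" by (simp add: S_def N_def)
    then show ?thesis using recB[OF pM, of k] k unfolding G_def by simp
  qed
  have all: "int p dvd (coeff G k - (-1)^k * int (N choose k)^3)" if "k \<le> N" for k
    using final_rec[where G="\<lambda>k. coeff G k" and p=p and N=N, OF p Np G0 rec that] by simp
  have s: "int p dvd ((\<Sum>k\<le>N. coeff G k * (-1)^k) - int (\<Sum>r=0..N. (N choose r)^3))"
    by (rule sum_cong_lemma) (rule all)
  have d1: "degree (1 - x) \<le> 1" unfolding x_def by (intro degree_diff_le) auto
  have dg: "degree G \<le> N"
    using degree_mult_le[of "1-x" "u*u"] degree_mult_le[of u u] degree_fpoly[of M] d1
    by (simp add: G_def u_def N_def)
  have "poly G (-1) = (\<Sum>k\<le>N. coeff G k * (-1)^k)" by (rule poly_sum_le[OF dg])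
  moreover have "poly G (-1) = 2*(poly u (-1))^2" by (simp add: G_def x_def power2_eq_square)
  ultimately show ?thesis using s unfolding N_def by (metis dvd_diff_commute)
qed

end


lemma mod8: assumes "odd (p::nat)" shows "odd (p div 4) \<longleftrightarrow> ([p = 5] (mod 8) \<or> [p = 7] (mod 8))"
proof -
  define a where "a = p div 8"
  define b where "b = p mod 8"
  have pe: "p = b + 8*a" by (simp add: a_def b_def)
  have b8: "b < 8" by (simp add: b_def)
  have ob: "odd b" using assms pe by simp
  have d: "p div 4 = b div 4 + 2*a" unfolding pe by simp
  have c: "[p = 5] (mod 8) \<longleftrightarrow> b = 5" "[p = 7] (mod 8) \<longleftrightarrow> b = 7"
    by (simp_all add: cong_def b_def)
  have "b = 0 \<or> b = 1 \<or> b = 2 \<or> b = 3 \<or> b = 4 \<or> b = 5 \<or> b = 6 \<or> b = 7" using b8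
    by (auto simp: less_Suc_eq numeral_eq_Suc)
  then have "b = 1 \<or> b = 3 \<or> b = 5 \<or> b = 7" using ob by auto
  then show ?thesis unfolding c d by auto
qed

lemma mod4: assumes "odd (p::nat)" shows "p mod 4 = 1 \<or> p mod 4 = 3"
proof -
  define b where "b = p mod 4"
  have b4: "b < 4" by (simp add: b_def)
  have ob: "odd b" using assms by (simp add: b_def odd_iff_mod_2_eq_one mod_mod_cancel)
  have "b = 0 \<or> b = 1 \<or> b = 2 \<or> b = 3" using b4 by (auto simp: less_Suc_eq numeral_eq_Suc)
  then have "b = 1 \<or> b = 3" using ob by auto
  then show ?thesis by (simp add: b_def)
qed

theorem mainTheorem5:
  fixes p :: nat
  assumes "prime p" and "odd p"
  shows "[(\<Sum>r = 0..(p - 1) div 2. ((p - 1) div 2 choose r) ^ 3) = 0] (mod p)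
    \<longleftrightarrow> ([p = 5] (mod 8) \<or> [p = 7] (mod 8))"
proof -
  define M where "M = p div 4"
  interpret setupM M .
  define B where "B = poly u (-1)"
  define F where "F = (\<Sum>r = 0..(p - 1) div 2. ((p - 1) div 2 choose r) ^ 3)"
  have pi: "prime (int p)" using assms(1) by simp
  have key: "\<exists>e::nat. e \<le> 1 \<and> int p dvd (int F - 2^e * B^2)"
  proof (cases "p mod 4 = 1")
    case True
    have pe: "p = 4*M + p mod 4" unfolding M_def by simp
    then have pM: "p = 4*M+1" using True by simp
    then have N: "(p-1) div 2 = 2*M" by simp
    show ?thesis using keyA[OF assms(1) pM] unfolding F_def B_def N by (intro exI[of _ 0]) simp
  next
    case False
    have pe: "p = 4*M + p mod 4" unfolding M_def by simp
    then have pM: "p = 4*M+3" using False mod4[OF assms(2)] by simp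
    have "(p-1) div 2 = (2*(2*M+1)) div 2" by (subst pM) simp
    then have N: "(p-1) div 2 = 2*M+1" by simp
    show ?thesis using keyB[OF assms(1) pM] unfolding F_def B_def N by (intro exI[of _ 1]) simp
  qed
  then obtain e :: nat where e: "e \<le> 1" "int p dvd (int F - 2^e * B^2)" by blast
  have p2: "\<not> int p dvd 2"
  proof
    assume "int p dvd 2"
    then have "int p dvd int 2" by simp
    then have "p dvd 2" by (simp only: int_dvd_int_iff)
    then have "p \<le> 2" by (simp add: dvd_imp_le)
    with assms show False using prime_ge_2_nat[of p] by (cases "p = 2") auto
  qed
  have "[F = 0] (mod p) \<longleftrightarrow> int p dvd int F" by (simp add: cong_0_iff)
  also have "\<dots> \<longleftrightarrow> int p dvd 2^e * B^2"
  proof -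
    have "int F = (int F - 2^e*B^2) + 2^e*B^2" by simp
    then have "int p dvd int F \<longleftrightarrow> int p dvd (int F - 2^e*B^2) + 2^e*B^2" by simp
    also have "\<dots> \<longleftrightarrow> int p dvd 2^e*B^2" by (rule dvd_add_right_iff[OF e(2)])
    finally show ?thesis .
  qed
  also have "\<dots> \<longleftrightarrow> int p dvd B"
  proof -
    have "\<not> int p dvd 2^e" using p2 pi prime_dvd_power by blast
    then show ?thesis using pi by (simp add: prime_dvd_mult_iff prime_dvd_power_iff)
  qed
  also have "\<dots> \<longleftrightarrow> odd M"
  proof (cases "even M")
    case True
    have Bc: "B = (-1)^(M div 2) * int (M choose (M div 2))"
      using True by (simp add: B_def Bval B_closed)
    have "\<not> int p dvd B"
    proof
      assume "int p dvd B"
      then have "int p dvd B * (-1)^(M div 2)" by (rule dvd_mult2)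
      moreover have "B * (-1)^(M div 2) = int (M choose (M div 2))"
        unfolding Bc by (simp flip: power_add add: mult_2[symmetric] power_mult)
      ultimately have "int p dvd int (M choose (M div 2))" by simp
      then have "p dvd (M choose (M div 2))" by (simp only: int_dvd_int_iff)
      moreover have "(M choose (M div 2)) dvd fact M"
      proof -
        have "fact (M div 2) * fact (M - M div 2) * (M choose (M div 2)) = fact M"
          by (rule binomial_fact_lemma) simp
        then show ?thesis by (metis dvd_triv_right)
      qed
      ultimately have "p dvd fact M" by (rule dvd_trans)
      then have "p \<le> M" using prime_dvd_fact_iff[OF assms(1)] by simp
      moreover have "M < p" using prime_gt_0_nat[OF assms(1)] by (simp add: M_def)
      ultimately show False by simp
    qed
    then show ?thesis using True by simp
  next
    case False
    then have "B = 0" by (simp add: B_def Bval B_closed)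
    then show ?thesis using False by simp
  qed
  also have "\<dots> \<longleftrightarrow> ([p = 5] (mod 8) \<or> [p = 7] (mod 8))"
    unfolding M_def by (rule mod8[OF assms(2)])
  finally show ?thesis unfolding F_def .
qed


end
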